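(* Let $G$ be a compact metrizable abelian monothetic group with Haar measure $\mu$. If $A\subset G$ has $\mu(A)>0$, then $2A-A=\{2a-b:a,b\in A\}$ contains a nonempty open set.
   Context: A topological group is monothetic if it has a dense cyclic subgroup. *)

theory Defs
  imports "HOL-Analysis.Analysis"
begin

definition topological_ab_group :: "'a::{topological_space, ab_group_add} itself \<Rightarrow> bool" where
  "topological_ab_group _ \<longleftrightarrow>
     continuous_on (UNIV :: ('a \<times> 'a) set) (\<lambda>p. fst p + snd p) \<and>
     continuous_on (UNIV :: 'a set) uminus"

definition cyclic_subgroup :: "'a::ab_group_add \<Rightarrow> 'a set" where
  "cyclic_subgroup g = range (\<lambda>n::nat. ((plus g) ^^ n) 0) \<union> range (\<lambda>n::nat. - (((plus g) ^^ n) 0))"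

definition monothetic :: "'a::{topological_space, ab_group_add} itself \<Rightarrow> bool" where
  "monothetic _ \<longleftrightarrow> (\<exists>g::'a. closure (cyclic_subgroup g) = UNIV)"

text \<open>(Normalised) Haar measure on a compact group: a translation-invariant Borel
  probability measure (regularity is automatic for finite Borel measures on
  compact metrizable spaces).\<close>
definition haar_measure :: "'a::{topological_space, ab_group_add} measure \<Rightarrow> bool" where
  "haar_measure M \<longleftrightarrow> sets M = sets borel \<and> emeasure M (space M) = 1 \<and>
     (\<forall>g. \<forall>A \<in> sets M. emeasure M ((\<lambda>x. g + x) ` A) = emeasure M A)"

end

theory Submission
  imports Defs
begin

locale hsetup =
  fixes M :: "'a::{metric_space, ab_group_add} measure"
  assumes cont_add: "continuous_on UNIV (\<lambda>p::'a\<times>'a. fst p + snd p)"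
  and cont_neg: "continuous_on UNIV (uminus::'a\<Rightarrow>'a)"
  and cpt: "compact (UNIV::'a set)"
  and sets_M: "sets M = sets borel"
  and univ1: "emeasure M (space M) = 1"
  and inv: "\<And>g B. B \<in> sets M \<Longrightarrow> emeasure M ((\<lambda>x. g + x) ` B) = emeasure M B"
begin

lemma space_M[simp]: "space M = UNIV"
  by (metis sets_M sets_eq_imp_space_eq space_borel)

lemma fin: "finite_measure M"
  using univ1 by (intro finite_measureI) simp

sublocale finite_measure M by (rule fin)

lemma meas_univ: "measure M UNIV = 1"
  using univ1 by (simp add: measure_def)

lemma borel_in[simp]: "B \<in> sets borel \<Longrightarrow> B \<in> sets M"
  by (simp add: sets_M)

lemma open_in[simp]: "open B \<Longrightarrow> B \<in> sets M"
  by simp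

lemma closed_in[simp]: "closed B \<Longrightarrow> B \<in> sets M"
  by simp

lemma inv_meas: "B \<in> sets M \<Longrightarrow> measure M ((\<lambda>x. g + x) ` B) = measure M B"
  using inv by (simp add: measure_def)

lemma cont_comp2:
  fixes f h :: "'b::topological_space \<Rightarrow> 'a"
  assumes "continuous_on UNIV f" "continuous_on UNIV h"
  shows "continuous_on UNIV (\<lambda>x. f x + h x)"
proof -
  have "continuous_on UNIV (\<lambda>x. (f x, h x))"
    using assms by (intro continuous_on_Pair)
  then have "continuous_on UNIV ((\<lambda>p::'a\<times>'a. fst p + snd p) \<circ> (\<lambda>x. (f x, h x)))"
    by (rule continuous_on_compose) (rule continuous_on_subset[OF cont_add], simp)
  then show ?thesis by (simp add: o_def)
qed

lemma cont_neg2: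
  fixes f :: "'b::topological_space \<Rightarrow> 'a"
  assumes "continuous_on UNIV f"
  shows "continuous_on UNIV (\<lambda>x. - f x)"
proof -
  have "continuous_on UNIV (uminus \<circ> f)"
    by (rule continuous_on_compose[OF assms]) (rule continuous_on_subset[OF cont_neg], simp)
  then show ?thesis by (simp add: o_def)
qed

lemma cont_diff2:
  fixes f h :: "'b::topological_space \<Rightarrow> 'a"
  assumes "continuous_on UNIV f" "continuous_on UNIV h"
  shows "continuous_on UNIV (\<lambda>x. f x - h x)"
  using cont_comp2[OF assms(1) cont_neg2[OF assms(2)]] by simp


definition "regP B \<longleftrightarrow> (\<forall>e>0. \<exists>F U. closed F \<and> open U \<and> F \<subseteq> B \<and> B \<subseteq> U \<and> measure M (U - F) < e)"

lemma regP_open: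
  assumes "open B" shows "regP B"
  unfolding regP_def
proof (intro allI impI)
  fix e :: real assume e: "e > 0"
  show "\<exists>F U. closed F \<and> open U \<and> F \<subseteq> B \<and> B \<subseteq> U \<and> measure M (U - F) < e"
  proof (cases "B = UNIV")
    case True
    then show ?thesis using e by (intro exI[of _ UNIV]) auto
  next
    case False
    define F where "F n = {x. 1 / real (Suc n) \<le> infdist x (-B)}" for n
    have clF: "closed (F n)" for n
      unfolding F_def
      by (rule closed_Collect_le) (auto intro!: continuous_intros continuous_on_infdist)
    have FB: "F n \<subseteq> B" for n
    proof
      fix x assume "x \<in> F n"
      moreover have "0 < 1 / real (Suc n)" by simp
      ultimately have "infdist x (-B) > 0" unfolding F_def by (meson less_le_trans mem_Collect_eq)
      then show "x \<in> B" by (metis ComplI infdist_zero less_irrefl)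
    qed
    have inc: "incseq F"
    proof (rule incseq_SucI)
      fix n
      have "1 / real (Suc (Suc n)) \<le> 1 / real (Suc n)" by (simp add: frac_le)
      then show "F n \<subseteq> F (Suc n)" unfolding F_def by auto
    qed
    have UF: "(\<Union>n. F n) = B"
    proof
      show "(\<Union>n. F n) \<subseteq> B" using FB by auto
      show "B \<subseteq> (\<Union>n. F n)"
      proof
        fix x assume "x \<in> B"
        then have "infdist x (-B) > 0"
          using False assms by (intro infdist_pos_not_in_closed) auto
        then obtain n where "inverse (real (Suc n)) < infdist x (-B)"
          using reals_Archimedean by blast
        then have "x \<in> F n" unfolding F_def by (simp add: divide_inverse less_imp_le)
        then show "x \<in> (\<Union>n. F n)" by auto
      qed
    qed
    have "(\<lambda>n. measure M (F n)) \<longlonglongrightarrow> measure M (\<Union>n. F n)"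
      using clF inc by (intro Lim_measure_incseq) auto
    then have "(\<lambda>n. measure M (F n)) \<longlonglongrightarrow> measure M B" using UF by simp
    then obtain N where N: "\<bar>measure M (F N) - measure M B\<bar> < e"
      using e by (metis LIMSEQ_D le_refl real_norm_def)
    have "measure M (B - F N) = measure M B - measure M (F N)"
      using assms clF FB by (intro finite_measure_Diff) auto
    then have "measure M (B - F N) < e" using N by linarith
    then show ?thesis using clF FB assms by blast
  qed
qed

lemma regP_D:
  assumes "regP B" "e > 0"
  obtains F U where "closed F" "open U" "F \<subseteq> B" "B \<subseteq> U" "measure M (U - F) < e"
proof -
  from assms have "\<exists>F U. closed F \<and> open U \<and> F \<subseteq> B \<and> B \<subseteq> U \<and> measure M (U - F) < e"
    unfolding regP_def by simp
  then show ?thesis using that by (elim exE conjE) blast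
qed

lemma regP_compl:
  assumes "regP B" shows "regP (UNIV - B)"
  unfolding regP_def
proof (intro allI impI)
  fix e :: real assume e: "e > 0"
  obtain F U where *: "closed F" "open U" "F \<subseteq> B" "B \<subseteq> U" "measure M (U - F) < e"
    by (rule regP_D[OF assms e])
  have eq: "(UNIV - F) - (UNIV - U) = U - F" by blast
  show "\<exists>F' U'. closed F' \<and> open U' \<and> F' \<subseteq> UNIV - B \<and> UNIV - B \<subseteq> U' \<and> measure M (U' - F') < e"
  proof (intro exI conjI)
    show "closed (UNIV - U)" using *(2) by (simp add: closed_Diff)
    show "open (UNIV - F)" using *(1) by (simp add: open_Diff)
    show "UNIV - U \<subseteq> UNIV - B" using *(4) by blast
    show "UNIV - B \<subseteq> UNIV - F" using *(3) by blast
    show "measure M ((UNIV - F) - (UNIV - U)) < e" unfolding eq using *(5) .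
  qed
qed

lemma regP_Union:
  assumes "\<And>i::nat. regP (A i)" shows "regP (\<Union>i. A i)"
  unfolding regP_def
proof (intro allI impI)
  fix e :: real assume e: "e > 0"
  have ex: "\<forall>i. \<exists>p. closed (fst p) \<and> open (snd p) \<and> fst p \<subseteq> A i \<and> A i \<subseteq> snd p \<and> measure M (snd p - fst p) < e/4 * (1/2)^i"
  proof
    fix i
    have ei: "e/4 * (1/2)^i > 0" using e by simp
    obtain F U where "closed F" "open U" "F \<subseteq> A i" "A i \<subseteq> U" "measure M (U - F) < e/4 * (1/2)^i"
      by (rule regP_D[OF assms[of i] ei])
    then show "\<exists>p. closed (fst p) \<and> open (snd p) \<and> fst p \<subseteq> A i \<and> A i \<subseteq> snd p \<and> measure M (snd p - fst p) < e/4 * (1/2)^i"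
      by (intro exI[of _ "(F,U)"]) auto
  qed
  then obtain p where p: "\<forall>i. closed (fst (p i)) \<and> open (snd (p i)) \<and> fst (p i) \<subseteq> A i \<and> A i \<subseteq> snd (p i) \<and> measure M (snd (p i) - fst (p i)) < e/4 * (1/2)^i"
    using choice[OF ex] by blast
  define Fs where "Fs i = fst (p i)" for i
  define Us where "Us i = snd (p i)" for i
  have clF: "closed (Fs i)" and opU: "open (Us i)" and FA: "Fs i \<subseteq> A i" and AU: "A i \<subseteq> Us i"
    and mi: "measure M (Us i - Fs i) < e/4 * (1/2)^i" for i
    using p unfolding Fs_def Us_def by auto
  define Fin where "Fin N = (\<Union>i\<in>{..<N}. Fs i)" for N
  have clFin: "closed (Fin N)" for N unfolding Fin_def using clF by (intro closed_UN) auto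
  have incF: "incseq Fin" unfolding incseq_def Fin_def by (auto intro: less_le_trans)
  have UFin: "(\<Union>N. Fin N) = (\<Union>i. Fs i)" unfolding Fin_def by auto
  have "(\<lambda>N. measure M (Fin N)) \<longlonglongrightarrow> measure M (\<Union>N. Fin N)"
    using clFin incF by (intro Lim_measure_incseq) auto
  then have "(\<lambda>N. measure M (Fin N)) \<longlonglongrightarrow> measure M (\<Union>i. Fs i)" using UFin by simp
  moreover have "e/2 > 0" using e by simp
  ultimately obtain N where N: "\<bar>measure M (Fin N) - measure M (\<Union>i. Fs i)\<bar> < e/2"
    by (metis LIMSEQ_D le_refl real_norm_def)
  have sFs: "(\<Union>i. Fs i) \<in> sets M" using sets.countable_UN''[of UNIV Fs] clF by simp
  have d1: "measure M ((\<Union>i. Fs i) - Fin N) < e/2"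
  proof -
    have "measure M ((\<Union>i. Fs i) - Fin N) = measure M (\<Union>i. Fs i) - measure M (Fin N)"
      using sFs clFin UFin by (intro finite_measure_Diff) auto
    then show ?thesis using N by linarith
  qed
  have gs: "(\<lambda>i. e/4 * (1/2)^i) sums (e/4 * (1 / (1 - 1/2)))"
    by (intro sums_mult geometric_sums) simp
  have gsum: "summable (\<lambda>i. e/4 * (1/2::real)^i)" using gs by (rule sums_summable)
  have gval: "(\<Sum>i. e/4 * (1/2::real)^i) = e/2" using gs sums_unique by fastforce
  have sD: "(Us i - Fs i) \<in> sets M" for i using sets.Diff[OF open_in[OF opU] closed_in[OF clF]] .
  have summ: "summable (\<lambda>i. measure M (Us i - Fs i))"
    by (rule summable_comparison_test[OF _ gsum]) (use mi in \<open>auto intro!: exI[of _ 0] less_imp_le\<close>)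
  have d2: "measure M (\<Union>i. Us i - Fs i) \<le> e/2"
  proof -
    have "measure M (\<Union>i. Us i - Fs i) \<le> (\<Sum>i. measure M (Us i - Fs i))"
      using sD summ by (intro finite_measure_subadditive_countably) auto
    also have "\<dots> \<le> (\<Sum>i. e/4 * (1/2)^i)"
      using summ gsum mi by (intro suminf_le) (auto intro: less_imp_le)
    finally show ?thesis using gval by simp
  qed
  define U where "U = (\<Union>i. Us i)"
  have opUU: "open U" unfolding U_def using opU by auto
  have sUD: "(\<Union>i. Us i - Fs i) \<in> sets M" using sets.countable_UN''[of UNIV "\<lambda>i. Us i - Fs i"] sD by simp
  have sFD: "(\<Union>i. Fs i) - Fin N \<in> sets M" using sets.Diff[OF sFs closed_in[OF clFin[of N]]] .
  have sub: "U - Fin N \<subseteq> (\<Union>i. Us i - Fs i) \<union> ((\<Union>i. Fs i) - Fin N)"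
    unfolding U_def by blast
  have "measure M (U - Fin N) \<le> measure M ((\<Union>i. Us i - Fs i) \<union> ((\<Union>i. Fs i) - Fin N))"
    using sUD sFD by (intro finite_measure_mono[OF sub] sets.Un)
  also have "\<dots> \<le> measure M (\<Union>i. Us i - Fs i) + measure M ((\<Union>i. Fs i) - Fin N)"
    using sUD sFD by (intro measure_Un_le)
  finally have m1: "measure M (U - Fin N) < e" using d1 d2 by linarith
  have m2: "Fin N \<subseteq> (\<Union>i. A i)" unfolding Fin_def using FA by (auto simp: subset_eq)
  have m3: "(\<Union>i. A i) \<subseteq> U" unfolding U_def using AU by (auto simp: subset_eq)
  show "\<exists>F U. closed F \<and> open U \<and> F \<subseteq> (\<Union>i. A i) \<and> (\<Union>i. A i) \<subseteq> U \<and> measure M (U - F) < e"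
    by (rule exI[of _ "Fin N"], rule exI[of _ U]) (simp only: m1 m2 m3 clFin opUU)
qed

lemma regP_borel:
  assumes "B \<in> sets borel" shows "regP B"
  using assms unfolding sets_borel
proof (induction rule: sigma_sets.induct)
  case (Basic a) then show ?case by (auto intro: regP_open)
next
  case Empty then show ?case by (auto intro: regP_open)
next
  case (Compl a) then show ?case using regP_compl by blast
next
  case (Union a) then show ?case using regP_Union[of a] by simp
qed

lemma inner_compact:
  assumes "B \<in> sets M" "measure M B > 0"
  obtains K where "compact K" "K \<subseteq> B" "measure M K > 0"
proof -
  have h: "measure M B / 2 > 0" using assms by simp
  have rB: "regP B" using regP_borel[of B] assms sets_M by simp
  obtain F U where *: "closed F" "open U" "F \<subseteq> B" "B \<subseteq> U" "measure M (U - F) < measure M B / 2"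
    by (rule regP_D[OF rB h])
  have "measure M B \<le> measure M (F \<union> (U - F))"
    using * by (intro finite_measure_mono) auto
  also have "\<dots> \<le> measure M F + measure M (U - F)"
    using * by (intro measure_Un_le) auto
  finally have "measure M F > 0" using * assms by linarith
  moreover have "compact F" using * cpt by (metis compact_Int_closed inf_top_left)
  ultimately show ?thesis using * that by blast
qed

lemma compact_in_pair:
  fixes C :: "('a \<times> 'a) set"
  assumes cC: "compact C"
  shows "C \<in> sets (M \<Otimes>\<^sub>M M)"
proof -
  define R where "R r pq = ball (fst pq) r \<times> ball (snd pq) r" for r :: real and pq :: "'a \<times> 'a"
  have ex: "\<forall>n::nat. \<exists>F. finite F \<and> F \<subseteq> C \<and> C \<subseteq> (\<Union>pq\<in>F. R (1/Suc n) pq)"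
  proof
    fix n :: nat
    have op: "\<And>T. T \<in> C \<Longrightarrow> open (R (1/Suc n) T)" unfolding R_def by (intro open_Times open_ball)
    have cov: "C \<subseteq> (\<Union>pq\<in>C. R (1/Suc n) pq)"
    proof
      fix z assume "z \<in> C"
      moreover have "z \<in> R (1/Suc n) z" unfolding R_def by (cases z) simp
      ultimately show "z \<in> (\<Union>pq\<in>C. R (1/Suc n) pq)" by blast
    qed
    obtain F where "F \<subseteq> C" "finite F" "C \<subseteq> (\<Union>pq\<in>F. R (1/Suc n) pq)"
      by (rule compactE_image[OF cC op cov])
    then show "\<exists>F. finite F \<and> F \<subseteq> C \<and> C \<subseteq> (\<Union>pq\<in>F. R (1/Suc n) pq)" by blast
  qed
  obtain F where F: "\<forall>n. finite (F n) \<and> F n \<subseteq> C \<and> C \<subseteq> (\<Union>pq\<in>F n. R (1/Suc n) pq)"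
    using choice[OF ex] by blast
  define Op where "Op n = (\<Union>pq\<in>F n. R (1/Suc n) pq)" for n
  have Fn: "finite (F n) \<and> F n \<subseteq> C \<and> C \<subseteq> (\<Union>pq\<in>F n. R (1/Suc n) pq)" for n using F by (rule spec)
  have F1: "finite (F n)" for n using Fn[of n] by (rule conjunct1)
  have F2: "F n \<subseteq> C" for n using Fn[of n] by (elim conjE)
  have F3: "C \<subseteq> Op n" for n using Fn[of n] unfolding Op_def by (elim conjE)
  have Rs: "R r pq \<in> sets (M \<Otimes>\<^sub>M M)" for r pq
    unfolding R_def by (intro pair_measureI open_in open_ball)
  have Os: "Op n \<in> sets (M \<Otimes>\<^sub>M M)" for n
    unfolding Op_def using F1 Rs by (intro sets.finite_UN) auto
  have eq: "C = (\<Inter>n. Op n)"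
  proof
    show "C \<subseteq> (\<Inter>n. Op n)" using F3 by (simp add: subset_eq)
    show "(\<Inter>n. Op n) \<subseteq> C"
    proof
      fix z assume z: "z \<in> (\<Inter>n. Op n)"
      have "\<forall>e>0. \<exists>y\<in>C. dist y z < e"
      proof (intro allI impI)
        fix e :: real assume e: "e > 0"
        then obtain n where n: "inverse (real (Suc n)) < e/2"
          using reals_Archimedean[of "e/2"] by auto
        from z have "z \<in> Op n" by blast
        then obtain pq where pq: "pq \<in> F n" "z \<in> R (1/Suc n) pq" unfolding Op_def by blast
        obtain a b where ab: "pq = (a,b)" by (cases pq)
        obtain x y where xy: "z = (x,y)" by (cases z)
        have d1: "dist a x < 1/Suc n" and d2: "dist b y < 1/Suc n"
          using pq(2) unfolding R_def ab xy by (auto simp: dist_commute)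
        have "dist pq z = sqrt ((dist a x)\<^sup>2 + (dist b y)\<^sup>2)" unfolding ab xy by (rule dist_Pair_Pair)
        also have "\<dots> \<le> dist a x + dist b y" by (intro sqrt_sum_squares_le_sum) auto
        also have "\<dots> < e"
        proof -
          have "1/real (Suc n) = inverse (real (Suc n))" by (rule divide_inverse_commute[of 1, simplified])
          then show ?thesis using d1 d2 n by linarith
        qed
        finally have "dist pq z < e" .
        moreover have "pq \<in> C" using pq(1) F2 by (auto simp: subset_eq)
        ultimately show "\<exists>y\<in>C. dist y z < e" by blast
      qed
      then show "z \<in> C" using closed_approachable[OF compact_imp_closed[OF cC]] by blast
    qed
  qed
  have U: "UNIV \<in> sets (M \<Otimes>\<^sub>M M)"
    using sets.top[of "M \<Otimes>\<^sub>M M"] by (simp add: space_pair_measure)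
  show ?thesis unfolding eq using Os U by (intro sets.countable_INT'') auto
qed

lemma cvimage: "continuous_on UNIV f \<Longrightarrow> closed S \<Longrightarrow> closed (f -` S)"
  using continuous_on_closed_vimage[of UNIV f] by simp

lemma ovimage: "continuous_on UNIV f \<Longrightarrow> open S \<Longrightarrow> open (f -` S)"
  using continuous_on_open_vimage[of UNIV f] by simp

lemma cptP: "compact (UNIV :: ('a \<times> 'a) set)"
  using compact_Times[OF cpt cpt] by simp

lemma closed_cpt: "closed (S :: 'a set) \<Longrightarrow> compact S"
  using cpt by (metis compact_Int_closed inf_top_left)

lemma closed_cptP: "closed (S :: ('a \<times> 'a) set) \<Longrightarrow> compact S"
  using cptP by (metis compact_Int_closed inf_top_left)

lemma neg_cpt: "compact K \<Longrightarrow> compact (uminus ` (K::'a set))"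
  using cont_neg by (metis compact_continuous_image continuous_on_subset subset_UNIV)

lemma img_add: "(\<lambda>y. x + y) ` (K::'a set) = {y. y - x \<in> K}"
proof
  show "(\<lambda>y. x + y) ` K \<subseteq> {y. y - x \<in> K}" by auto
  show "{y. y - x \<in> K} \<subseteq> (\<lambda>y. x + y) ` K"
  proof
    fix y assume "y \<in> {y. y - x \<in> K}"
    then have "y - x \<in> K" by simp
    moreover have "y = x + (y - x)" by simp
    ultimately show "y \<in> (\<lambda>y. x + y) ` K" by (rule rev_image_eqI)
  qed
qed

lemma img_refl: "(\<lambda>x. c + x) ` (uminus ` (K::'a set)) = {x. c - x \<in> K}"
proof
  show "(\<lambda>x. c + x) ` uminus ` K \<subseteq> {x. c - x \<in> K}" by auto
  show "{x. c - x \<in> K} \<subseteq> (\<lambda>x. c + x) ` uminus ` K"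
  proof
    fix y assume "y \<in> {x. c - x \<in> K}"
    then have "c - y \<in> K" by simp
    then have "- (c - y) \<in> uminus ` K" by blast
    moreover have "y = c + (- (c - y))" by simp
    ultimately show "y \<in> (\<lambda>x. c + x) ` uminus ` K" by (rule rev_image_eqI)
  qed
qed

lemma reflect_eq:
  assumes K: "compact K"
  shows "emeasure M (uminus ` K) = emeasure M K"
proof -
  interpret P: pair_sigma_finite M M
    by (simp add: pair_sigma_finite_def sigma_finite_measure_axioms)
  define D where "D = (\<lambda>p::'a\<times>'a. snd p - fst p) -` K"
  have cD: "closed D" unfolding D_def
    by (intro cvimage compact_imp_closed K cont_diff2 continuous_on_fst continuous_on_snd continuous_on_id)
  have sD: "D \<in> sets (M \<Otimes>\<^sub>M M)" by (intro compact_in_pair closed_cptP cD)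
  have nK: "uminus ` K \<in> sets M" using neg_cpt[OF K] by (simp add: compact_imp_closed)
  have sK: "K \<in> sets M" using K by (simp add: compact_imp_closed)
  have "emeasure (M \<Otimes>\<^sub>M M) D = (\<integral>\<^sup>+x. emeasure M (Pair x -` D) \<partial>M)"
    by (rule emeasure_pair_measure_alt[OF sD])
  also have "\<dots> = (\<integral>\<^sup>+x. emeasure M K \<partial>M)"
  proof (rule nn_integral_cong)
    fix x
    have "Pair x -` D = (\<lambda>y. x + y) ` K" unfolding D_def img_add by auto
    then show "emeasure M (Pair x -` D) = emeasure M K" using inv[OF sK] by simp
  qed
  also have "\<dots> = emeasure M K" using univ1 by simp
  finally have 1: "emeasure (M \<Otimes>\<^sub>M M) D = emeasure M K" .
  have "emeasure (M \<Otimes>\<^sub>M M) D = (\<integral>\<^sup>+y. emeasure M ((\<lambda>x. (x, y)) -` D) \<partial>M)"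
    by (rule P.emeasure_pair_measure_alt2[OF sD])
  also have "\<dots> = (\<integral>\<^sup>+y. emeasure M (uminus ` K) \<partial>M)"
  proof (rule nn_integral_cong)
    fix y
    have "(\<lambda>x. (x, y)) -` D = (\<lambda>x. y + x) ` (uminus ` K)" unfolding D_def img_refl by auto
    then show "emeasure M ((\<lambda>x. (x, y)) -` D) = emeasure M (uminus ` K)" using inv[OF nK] by simp
  qed
  also have "\<dots> = emeasure M (uminus ` K)" using univ1 by simp
  finally show ?thesis using 1 by simp
qed

lemma fubini_pos:
  assumes K: "compact K" and pos: "emeasure M K > 0"
  shows "\<exists>x. emeasure M {a. a \<in> K \<and> a + a - x \<in> K} > 0"
proof (rule ccontr)
  assume "\<not> ?thesis"
  then have z: "emeasure M {a. a \<in> K \<and> a + a - x \<in> K} = 0" for x by (simp add: not_less)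
  interpret P: pair_sigma_finite M M
    by (simp add: pair_sigma_finite_def sigma_finite_measure_axioms)
  define C where "C = (snd -` K) \<inter> (\<lambda>p::'a\<times>'a. snd p + snd p - fst p) -` K"
  have cC: "closed C" unfolding C_def
    by (intro closed_Int cvimage compact_imp_closed K cont_diff2 cont_comp2 continuous_on_fst continuous_on_snd continuous_on_id)
  have sC: "C \<in> sets (M \<Otimes>\<^sub>M M)" by (intro compact_in_pair closed_cptP cC)
  have nK: "uminus ` K \<in> sets M" using neg_cpt[OF K] by (simp add: compact_imp_closed)
  have sK: "K \<in> sets M" using K by (simp add: compact_imp_closed)
  have "emeasure (M \<Otimes>\<^sub>M M) C = (\<integral>\<^sup>+x. emeasure M (Pair x -` C) \<partial>M)"
    by (rule emeasure_pair_measure_alt[OF sC])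
  also have "\<dots> = (\<integral>\<^sup>+x. 0 \<partial>M)"
  proof (rule nn_integral_cong)
    fix x
    have "Pair x -` C = {a. a \<in> K \<and> a + a - x \<in> K}" unfolding C_def by auto
    then show "emeasure M (Pair x -` C) = 0" using z by simp
  qed
  finally have 1: "emeasure (M \<Otimes>\<^sub>M M) C = 0" by simp
  have "emeasure (M \<Otimes>\<^sub>M M) C = (\<integral>\<^sup>+a. emeasure M ((\<lambda>x. (x, a)) -` C) \<partial>M)"
    by (rule P.emeasure_pair_measure_alt2[OF sC])
  also have "\<dots> = (\<integral>\<^sup>+a. emeasure M K * indicator K a \<partial>M)"
  proof (rule nn_integral_cong)
    fix a
    show "emeasure M ((\<lambda>x. (x, a)) -` C) = emeasure M K * indicator K a"
    proof (cases "a \<in> K")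
      case True
      have "(\<lambda>x. (x, a)) -` C = (\<lambda>x. (a + a) + x) ` (uminus ` K)" unfolding C_def img_refl using True by auto
      then have "emeasure M ((\<lambda>x. (x, a)) -` C) = emeasure M (uminus ` K)" using inv[OF nK] by simp
      then show ?thesis using True reflect_eq[OF K] by simp
    next
      case False
      then have "(\<lambda>x. (x, a)) -` C = {}" unfolding C_def by auto
      then show ?thesis using False by simp
    qed
  qed
  also have "\<dots> = emeasure M K * emeasure M K" using sK by (rule nn_integral_cmult_indicator)
  finally have "emeasure M K * emeasure M K = 0" using 1 by simp
  then show False using pos by simp
qed

lemma arch1: "0 < (x::real) \<Longrightarrow> \<exists>n. 1 / real (Suc n) < x"
  using reals_Archimedean[of x] by (metis inverse_eq_divide)

lemma unif_transl:
  assumes e: "e > 0"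
  shows "\<exists>d>0. \<forall>a s::'a. dist s 0 < d \<longrightarrow> dist (a + s) a < (e::real)"
proof -
  have "uniformly_continuous_on UNIV (\<lambda>p::'a\<times>'a. fst p + snd p)"
    by (rule compact_uniformly_continuous[OF cont_add cptP])
  then obtain d where d: "d > 0" and
    hd0: "\<forall>x::'a\<times>'a\<in>UNIV. \<forall>x'::'a\<times>'a\<in>UNIV. dist x' x < d \<longrightarrow> dist (fst x' + snd x') (fst x + snd x) < e"
    using e unfolding uniformly_continuous_on_def by blast
  have hd: "\<And>x x'::'a\<times>'a. dist x' x < d \<Longrightarrow> dist (fst x' + snd x') (fst x + snd x) < e"
    using hd0 by blast
  have "\<forall>a s::'a. dist s 0 < d \<longrightarrow> dist (a + s) a < e"
  proof (intro allI impI)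
    fix a s :: 'a assume s: "dist s 0 < d"
    have ds: "dist (a, s) (a, 0) = dist s 0" by (simp add: dist_Pair_Pair)
    have "dist (a,s) (a,0) < d" using ds s by simp
    from hd[OF this] show "dist (a + s) a < e" by simp
  qed
  then show ?thesis using d by blast
qed

lemma transl_cpt: "compact K \<Longrightarrow> compact ((\<lambda>x. s + x) ` (K::'a set))"
  by (rule compact_continuous_image[OF continuous_on_subset]) (auto intro: cont_comp2 continuous_intros)

lemma steinhaus:
  assumes E: "compact E" and pos: "measure M E > 0"
  shows "\<exists>\<delta>>0. \<forall>s. dist s 0 < \<delta> \<longrightarrow> (\<exists>a\<in>E. a + s \<in> E)"
proof -
  have ne: "E \<noteq> {}" using pos by auto
  have cE: "closed E" using E by (rule compact_imp_closed)
  define U where "U n = {x. infdist x E < 1 / real (Suc n)}" for n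
  have oU: "open (U n)" for n unfolding U_def
    by (rule open_Collect_less) (auto intro!: continuous_intros continuous_on_infdist)
  have dec: "decseq U"
  proof (rule decseq_SucI)
    fix n
    have "1 / real (Suc (Suc n)) \<le> 1 / real (Suc n)" by (simp add: frac_le)
    then show "U (Suc n) \<subseteq> U n" unfolding U_def by auto
  qed
  have EU: "E \<subseteq> U n" for n unfolding U_def by auto
  have IU: "(\<Inter>n. U n) = E"
  proof
    show "E \<subseteq> (\<Inter>n. U n)" using EU by blast
    show "(\<Inter>n. U n) \<subseteq> E"
    proof
      fix x assume x: "x \<in> (\<Inter>n. U n)"
      have "infdist x E = 0"
      proof (rule ccontr)
        assume "infdist x E \<noteq> 0"
        then have "infdist x E > 0" using infdist_nonneg[of x E] by linarith
        then obtain n where n: "1 / real (Suc n) < infdist x E"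
          using arch1 by blast
        have "x \<in> U n" using x by blast
        then have "infdist x E < 1 / real (Suc n)" unfolding U_def by simp
        then show False using n by linarith
      qed
      then show "x \<in> E" using in_closure_iff_infdist_zero[OF ne] cE closure_closed by metis
    qed
  qed
  have "(\<lambda>n. measure M (U n)) \<longlonglongrightarrow> measure M (\<Inter>n. U n)"
    using oU dec by (intro Lim_measure_decseq) auto
  then have "(\<lambda>n. measure M (U n)) \<longlonglongrightarrow> measure M E" using IU by simp
  then obtain N where N: "\<bar>measure M (U N) - measure M E\<bar> < measure M E"
    using pos by (metis LIMSEQ_D le_refl real_norm_def)
  obtain d where d: "d > 0" and hd: "\<And>a s::'a. dist s 0 < d \<Longrightarrow> dist (a + s) a < 1 / real (Suc N)"
    using unif_transl[of "1 / real (Suc N)"] by auto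
  have "\<forall>s. dist s 0 < d \<longrightarrow> (\<exists>a\<in>E. a + s \<in> E)"
  proof (intro allI impI)
    fix s :: 'a assume s: "dist s 0 < d"
    show "\<exists>a\<in>E. a + s \<in> E"
    proof (rule ccontr)
      assume "\<not> (\<exists>a\<in>E. a + s \<in> E)"
      then have disj: "E \<inter> (\<lambda>x. s + x) ` E = {}" by (auto simp: add.commute)
      have sE: "E \<in> sets M" using cE by simp
      have sE2: "(\<lambda>x. s + x) ` E \<in> sets M" using transl_cpt[OF E] by (simp add: compact_imp_closed)
      have sub: "E \<union> (\<lambda>x. s + x) ` E \<subseteq> U N"
      proof -
        have "s + a \<in> U N" if "a \<in> E" for a
        proof -
          have "infdist (a + s) E \<le> dist (a + s) a" using that by (rule infdist_le)
          also have "\<dots> < 1 / real (Suc N)" using hd[OF s] .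
          finally show ?thesis unfolding U_def by (simp add: add.commute)
        qed
        then show ?thesis using EU by blast
      qed
      have "measure M (E \<union> (\<lambda>x. s + x) ` E) = measure M E + measure M ((\<lambda>x. s + x) ` E)"
        using sE sE2 disj by (rule finite_measure_Union)
      also have "\<dots> = 2 * measure M E" using inv_meas[OF sE] by simp
      finally have "2 * measure M E \<le> measure M (U N)"
        using finite_measure_mono[OF sub] oU by simp
      then show False using N by linarith
    qed
  qed
  then show ?thesis using d by blast
qed

lemma cont_transl: "continuous_on UNIV (\<lambda>x::'a. x + c)"
  by (rule cont_comp2) (auto intro: continuous_intros)


lemma H_closed: "closed (range (\<lambda>x::'a. x + x))"
proof -
  have "compact (range (\<lambda>x::'a. x + x))"
    by (rule compact_continuous_image[OF _ cpt]) (intro cont_comp2 continuous_on_id)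
  then show ?thesis by (rule compact_imp_closed)
qed

lemma dbl_in: "y = k + k \<Longrightarrow> y \<in> range (\<lambda>x::'a. x + x)"
  by (rule range_eqI)

lemma dbl_in2: "y = g + (k + k) \<Longrightarrow> y \<in> (\<lambda>x. g + x) ` range (\<lambda>x::'a. x + x)"
  by (rule image_eqI[OF _ dbl_in]) auto

lemma cyc_sub:
  fixes g :: 'a
  defines "H \<equiv> range (\<lambda>x::'a. x + x)"
  shows "cyclic_subgroup g \<subseteq> H \<union> (\<lambda>x. g + x) ` H"
proof -
  have P: "((plus g) ^^ n) 0 \<in> H \<union> (\<lambda>x. g + x) ` H" for n
  proof (induction n)
    case 0
    have "(0::'a) = 0 + 0" by simp
    then have "(0::'a) \<in> H" unfolding H_def by (rule range_eqI)
    then show ?case by simp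
  next
    case (Suc n)
    let ?y = "((plus g) ^^ n) 0"
    have eq: "((plus g) ^^ Suc n) 0 = g + ?y" by simp
    from Suc show ?case
    proof
      assume "?y \<in> H"
      then obtain h where "?y = h + h" unfolding H_def by auto
      then have "g + ?y \<in> (\<lambda>x. g + x) ` H" unfolding H_def by (intro dbl_in2) simp
      then show ?thesis unfolding eq by simp
    next
      assume "?y \<in> (\<lambda>x. g + x) ` H"
      then obtain h where h: "?y = g + (h + h)" unfolding H_def by auto
      have "g + ?y = (g + h) + (g + h)" unfolding h by (simp add: algebra_simps)
      then have "g + ?y \<in> H" unfolding H_def by (rule dbl_in)
      then show ?thesis unfolding eq by simp
    qed
  qed
  have N: "- ((plus g) ^^ n) 0 \<in> H \<union> (\<lambda>x. g + x) ` H" for n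
  proof -
    let ?y = "((plus g) ^^ n) 0"
    from P[of n] show ?thesis
    proof
      assume "?y \<in> H"
      then obtain h where h: "?y = h + h" unfolding H_def by auto
      have "- ?y = (-h) + (-h)" unfolding h by simp
      then have "- ?y \<in> H" unfolding H_def by (rule dbl_in)
      then show ?thesis by simp
    next
      assume "?y \<in> (\<lambda>x. g + x) ` H"
      then obtain h where h: "?y = g + (h + h)" unfolding H_def by auto
      have "- ?y = g + ((- g - h) + (- g - h))" unfolding h by (simp add: algebra_simps)
      then have "- ?y \<in> (\<lambda>x. g + x) ` H" unfolding H_def by (rule dbl_in2)
      then show ?thesis by simp
    qed
  qed
  show ?thesis unfolding cyclic_subgroup_def using P N by auto
qed

lemma H_open:
  fixes g :: 'a
  assumes mono: "closure (cyclic_subgroup g) = UNIV"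
  shows "open (range (\<lambda>x::'a. x + x))"
proof -
  define H where "H = range (\<lambda>x::'a. x + x)"
  have cH: "closed H" unfolding H_def by (rule H_closed)
  have cgH: "closed ((\<lambda>x. g + x) ` H)"
    using transl_cpt[OF closed_cpt[OF cH]] by (rule compact_imp_closed)
  have "closure (cyclic_subgroup g) \<subseteq> H \<union> (\<lambda>x. g + x) ` H"
    using cyc_sub[of g] cH cgH unfolding H_def by (intro closure_minimal closed_Un) auto
  then have all: "UNIV = H \<union> (\<lambda>x. g + x) ` H" using mono by auto
  show ?thesis
  proof (cases "g \<in> H")
    case True
    then obtain k where k: "g = k + k" unfolding H_def by auto
    have "(\<lambda>x. g + x) ` H \<subseteq> H"
    proof
      fix y assume "y \<in> (\<lambda>x. g + x) ` H"
      then obtain h where h: "y = g + (h + h)" unfolding H_def by auto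
      have "y = (k + h) + (k + h)" unfolding h k by (simp add: algebra_simps)
      then show "y \<in> H" unfolding H_def by (rule dbl_in)
    qed
    then have "H = UNIV" using all by blast
    then show ?thesis unfolding H_def by simp
  next
    case False
    have "H = UNIV - (\<lambda>x. g + x) ` H"
    proof
      show "H \<subseteq> UNIV - (\<lambda>x. g + x) ` H"
      proof
        fix y assume y: "y \<in> H"
        show "y \<in> UNIV - (\<lambda>x. g + x) ` H"
        proof
          show "y \<notin> (\<lambda>x. g + x) ` H"
          proof
            assume "y \<in> (\<lambda>x. g + x) ` H"
            then obtain h where h: "y = g + (h + h)" unfolding H_def by auto
            obtain k where k: "y = k + k" using y unfolding H_def by auto
            have "g = (k - h) + (k - h)" using h k by (simp add: algebra_simps)
            then have "g \<in> H" unfolding H_def by (rule dbl_in)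
            then show False using False by simp
          qed
        qed simp
      qed
      show "UNIV - (\<lambda>x. g + x) ` H \<subseteq> H" using all by auto
    qed
    moreover have "open (UNIV - (\<lambda>x. g + x) ` H)" using cgH by (simp add: open_Diff)
    ultimately show ?thesis unfolding H_def by simp
  qed
qed

lemma half_small:
  assumes e: "e > 0"
  shows "\<exists>r>0. \<forall>t::'a. dist t 0 < r \<longrightarrow> t \<in> range (\<lambda>x::'a. x + x) \<longrightarrow> (\<exists>s. dist s 0 < e \<and> s + s = t)"
proof (rule ccontr)
  assume "\<not> ?thesis"
  then have "\<forall>r>0. \<exists>t::'a. dist t 0 < r \<and> t \<in> range (\<lambda>x::'a. x + x) \<and> (\<forall>s. s + s = t \<longrightarrow> \<not> dist s 0 < e)"
    by blast
  then have "\<forall>n::nat. \<exists>s::'a. dist (s + s) 0 < 1 / real (Suc n) \<and> (\<forall>s'. s' + s' = s + s \<longrightarrow> \<not> dist s' 0 < e)"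
    by (metis (no_types, lifting) of_nat_0_less_iff zero_less_Suc divide_pos_pos zero_less_one rangeE)
  then obtain sq :: "nat \<Rightarrow> 'a" where sq: "\<And>n. dist (sq n + sq n) 0 < 1 / real (Suc n)"
    and sq2: "\<And>n s'. s' + s' = sq n + sq n \<Longrightarrow> \<not> dist s' 0 < e"
    by metis
  have "seq_compact (UNIV::'a set)" by (rule compact_imp_seq_compact[OF cpt])
  then obtain l r where r: "strict_mono r" and lim: "(sq \<circ> r) \<longlonglongrightarrow> l"
    unfolding seq_compact_def by blast
  have lim1: "(\<lambda>n. sq (r n)) \<longlonglongrightarrow> l" using lim by (simp add: o_def)
  have "(\<lambda>n. (sq (r n), sq (r n))) \<longlonglongrightarrow> (l, l)" using lim1 by (intro tendsto_Pair)
  then have "(\<lambda>n. fst (sq (r n), sq (r n)) + snd (sq (r n), sq (r n))) \<longlonglongrightarrow> fst (l,l) + snd (l,l)"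
    by (intro continuous_on_tendsto_compose[OF cont_add]) auto
  then have lim2: "(\<lambda>n. sq (r n) + sq (r n)) \<longlonglongrightarrow> l + l" by simp
  have lim3: "(\<lambda>n. sq (r n) + sq (r n)) \<longlonglongrightarrow> 0"
  proof (rule metric_LIMSEQ_I)
    fix q :: real assume q: "q > 0"
    obtain N where N: "1 / real (Suc N) < q" using arch1[OF q] by blast
    have "\<forall>n\<ge>N. dist (sq (r n) + sq (r n)) 0 < q"
    proof (intro allI impI)
      fix n assume n: "n \<ge> N"
      have "N \<le> r n" using seq_suble[OF r, of n] n by linarith
      then have "1 / real (Suc (r n)) \<le> 1 / real (Suc N)" by (simp add: frac_le)
      then show "dist (sq (r n) + sq (r n)) 0 < q" using sq[of "r n"] N by linarith
    qed
    then show "\<exists>no. \<forall>n\<ge>no. dist (sq (r n) + sq (r n)) 0 < q" by blast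
  qed
  have ll: "l + l = 0" using LIMSEQ_unique[OF lim2 lim3] .
  have "(\<lambda>n. sq (r n) + (- l)) \<longlonglongrightarrow> l + (- l)"
    by (intro continuous_on_tendsto_compose[OF cont_transl lim1]) auto
  then have lim4: "(\<lambda>n. sq (r n) - l) \<longlonglongrightarrow> 0" by simp
  then obtain N where N: "\<forall>n\<ge>N. dist (sq (r n) - l) 0 < e"
    using metric_LIMSEQ_D[OF lim4 e] by blast
  have "(sq (r N) - l) + (sq (r N) - l) = sq (r N) + sq (r N)"
  proof -
    have "(sq (r N) - l) + (sq (r N) - l) = sq (r N) + sq (r N) - (l + l)" by (simp add: algebra_simps)
    then show ?thesis using ll by simp
  qed
  then have "\<not> dist (sq (r N) - l) 0 < e" by (rule sq2)
  then show False using N by auto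
qed

lemma half_open:
  fixes g :: 'a
  assumes mono: "closure (cyclic_subgroup g) = UNIV" and e: "e > 0"
  shows "\<exists>r>0. \<forall>t::'a. dist t 0 < r \<longrightarrow> (\<exists>s. dist s 0 < e \<and> s + s = t)"
proof -
  obtain r1 where r1: "r1 > 0" and h1: "\<forall>t::'a. dist t 0 < r1 \<longrightarrow> t \<in> range (\<lambda>x::'a. x + x) \<longrightarrow> (\<exists>s. dist s 0 < e \<and> s + s = t)"
    using half_small[OF e] by blast
  have z: "(0::'a) \<in> range (\<lambda>x::'a. x + x)" by (rule dbl_in[of _ 0]) simp
  have "\<exists>r2>0. ball (0::'a) r2 \<subseteq> range (\<lambda>x::'a. x + x)"
    using H_open[OF mono] z unfolding open_contains_ball by blast
  then obtain r2 where r2: "r2 > 0" and b: "ball (0::'a) r2 \<subseteq> range (\<lambda>x::'a. x + x)"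
    by blast
  have "\<forall>t::'a. dist t 0 < min r1 r2 \<longrightarrow> (\<exists>s. dist s 0 < e \<and> s + s = t)"
  proof (intro allI impI)
    fix t :: 'a assume t: "dist t 0 < min r1 r2"
    then have "dist 0 t < r2" by (simp add: dist_commute)
    then have "t \<in> ball 0 r2" by (simp only: mem_ball)
    then have tH: "t \<in> range (\<lambda>x::'a. x + x)" using b by (rule subsetD[rotated])
    have "dist t 0 < r1" using t by simp
    then show "\<exists>s. dist s 0 < e \<and> s + s = t" using h1 tH by blast
  qed
  moreover have "min r1 r2 > 0" using r1 r2 by simp
  ultimately show ?thesis by blast
qed

end

theorem corollary7p6:
  fixes \<mu> :: "'a::{metric_space, ab_group_add} measure"
    and A :: "'a set"
  assumes "topological_ab_group TYPE('a)"
    and "compact (UNIV :: 'a set)"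
    and "monothetic TYPE('a)"
    and "haar_measure \<mu>"
    and "A \<in> sets \<mu>"
    and "emeasure \<mu> A > 0"
  shows "\<exists>U. open U \<and> U \<noteq> {} \<and> U \<subseteq> {a + a - b | a b. a \<in> A \<and> b \<in> A}"
proof -
  have ca: "continuous_on UNIV (\<lambda>p::'a\<times>'a. fst p + snd p)" and cn: "continuous_on UNIV (uminus::'a\<Rightarrow>'a)"
    using assms(1) unfolding topological_ab_group_def by auto
  have hs1: "sets \<mu> = sets borel" and hs2: "emeasure \<mu> (space \<mu>) = 1"
    and hs3: "\<And>g B. B \<in> sets \<mu> \<Longrightarrow> emeasure \<mu> ((\<lambda>x. g + x) ` B) = emeasure \<mu> B"
    using assms(4) unfolding haar_measure_def by auto
  have "hsetup \<mu>" unfolding hsetup_def using ca cn assms(2) hs1 hs2 hs3 by blast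
  then interpret H: hsetup \<mu> .
  obtain g :: 'a where mono: "closure (cyclic_subgroup g) = UNIV"
    using assms(3) unfolding monothetic_def by blast
  have mA: "measure \<mu> A > 0" using assms(5,6) by (simp add: H.emeasure_eq_measure)
  obtain K where K: "compact K" "K \<subseteq> A" "measure \<mu> K > 0"
    by (rule H.inner_compact[OF assms(5) mA])
  have "emeasure \<mu> K > 0" using K(3) by (simp add: H.emeasure_eq_measure)
  then obtain x0 where x0: "emeasure \<mu> {a. a \<in> K \<and> a + a - x0 \<in> K} > 0"
    using H.fubini_pos[OF K(1)] by blast
  define E where "E = {a. a \<in> K \<and> a + a - x0 \<in> K}"
  have Eeq: "E = K \<inter> (\<lambda>a. a + a - x0) -` K" unfolding E_def by auto
  have "closed E" unfolding Eeq
    by (intro closed_Int compact_imp_closed K(1) H.cvimage H.cont_diff2 H.cont_comp2 continuous_on_id continuous_on_const)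
  then have cE: "compact E" by (rule H.closed_cpt)
  have mE: "measure \<mu> E > 0" using x0 unfolding E_def by (simp add: H.emeasure_eq_measure)
  obtain d where d: "d > 0" and hd: "\<forall>s::'a. dist s 0 < d \<longrightarrow> (\<exists>a\<in>E. a + s \<in> E)"
    using H.steinhaus[OF cE mE] by blast
  obtain r where r: "r > 0" and hr: "\<forall>t::'a. dist t 0 < r \<longrightarrow> (\<exists>s. dist s 0 < d \<and> s + s = t)"
    using H.half_open[OF mono d] by blast
  define U where "U = {x::'a. dist (x - x0) 0 < r}"
  have oU: "open U" unfolding U_def
    by (rule open_Collect_less) (intro continuous_on_dist H.cont_diff2 continuous_on_id continuous_on_const)+
  have x0U: "x0 \<in> U" using r by (simp add: U_def)
  have "U \<subseteq> {a + a - b | a b. a \<in> A \<and> b \<in> A}"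
  proof
    fix x assume "x \<in> U"
    then have "dist (x - x0) 0 < r" by (simp add: U_def)
    then obtain s where s1: "dist s 0 < d" and s2: "s + s = x - x0" using hr by blast
    then obtain a where a1: "a \<in> E" and a2: "a + s \<in> E" using hd by blast
    have in1: "a + s \<in> A" using a2 K(2) unfolding E_def by auto
    have in2: "a + a - x0 \<in> A" using a1 K(2) unfolding E_def by auto
    have "x = (s + s) + x0" using s2 by (simp add: algebra_simps)
    then have "x = (a + s) + (a + s) - (a + a - x0)" by (simp add: algebra_simps)
    then show "x \<in> {a + a - b | a b. a \<in> A \<and> b \<in> A}" using in1 in2 by blast
  qed
  then show ?thesis using oU x0U by blast
qed

end
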